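(* Let $(\Omega,\Sigma,\Pr)$ be a probability space and let $A_i\in\Sigma$ for $i\in\mathbb{N}$. For $k\in\mathbb{N}$ let $$S_k:=\sum_{1\le i_1<\cdots<i_k}\Pr(A_{i_1}\cap\cdots\cap A_{i_k})\in[0,\infty].$$ Fix $k\in\mathbb{N}$. Then the identity $$\Pr\Big(\bigcup_{1\le i_1<\cdots<i_k}(A_{i_1}\cap\cdots\cap A_{i_k})\Big)=\sum_{j\in\mathbb{Z}_+}(-1)^j\binom{j+k-1}{k-1}S_{j+k}$$ holds (with all $S_l$ finite and the series convergent) if and only if $S_l\in[0,\infty)$ for all $l\in\mathbb{N}$ and $\lim_{l\to\infty}l^{k-1}S_l=0$.
   Context: $\mathbb{N}$ denotes the positive integers and $\mathbb{Z}_+$ the nonnegative integers. The union on the left is over all strictly increasing $k$-tuples of positive integers. *)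

theory Defs
  imports "HOL-Probability.Probability"
begin

definition ksubsets :: "nat \<Rightarrow> nat set set" where
  "ksubsets k = {I. I \<subseteq> {1..} \<and> finite I \<and> card I = k}"

definition Ssum :: "'a measure \<Rightarrow> (nat \<Rightarrow> 'a set) \<Rightarrow> nat \<Rightarrow> ennreal" where
  "Ssum M A k = (\<Sum>\<^sub>\<infinity> I \<in> ksubsets k. ennreal (measure M (\<Inter>i\<in>I. A i)))"

end

theory Submission
  imports Defs
begin


lemma alt_partial: "(\<Sum>j\<le>m. (-1)^j * real (Suc p choose j)) = (-1)^m * real (p choose m)"
proof (induction m)
  case 0 then show ?case by simp
next
  case (Suc m)
  have "(\<Sum>j\<le>Suc m. (-1)^j * real (Suc p choose j)) = (-1)^m * real (p choose m) + (-1)^Suc m * real (Suc p choose Suc m)"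
    using Suc by simp
  also have "\<dots> = (-1)^Suc m * real (p choose Suc m)"
    by (simp add: binomial_Suc_Suc algebra_simps)
  finally show ?case .
qed

definition Fc :: "nat \<Rightarrow> nat \<Rightarrow> nat \<Rightarrow> real" where
  "Fc k n m = (\<Sum>j\<le>m. (-1)^j * real ((j+k-1) choose (k-1)) * real (n choose (j+k)))"

definition Ic :: "nat \<Rightarrow> nat \<Rightarrow> real" where
  "Ic k n = (if k \<le> n then 1 else 0)"

lemma comb_step:
  assumes "k \<ge> 1"
  shows "(\<Sum>j\<le>m. (-1)^j * real ((j+k-1) choose (k-1)) * real (n choose (j+k-1)))
     = (if n + 1 = k then 1 else if k \<le> n then (-1)^m * real (n choose (k-1)) * real ((n-k) choose m) else 0)"
proof (cases "k - 1 \<le> n")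
  case False
  then have "\<And>j. n choose (j+k-1) = 0" by simp
  moreover have "n+1 \<noteq> k" "\<not> k \<le> n" using False by auto
  moreover have "(\<Sum>j\<le>m. (-1)^j * real ((j+k-1) choose (k-1)) * real (n choose (j+k-1))) = 0"
    by (rule sum.neutral) (use False in auto)
  ultimately show ?thesis by simp
next
  case True
  have eq: "real ((j+k-1) choose (k-1)) * real (n choose (j+k-1)) = real (n choose (k-1)) * real ((n-(k-1)) choose j)" for j
  proof (cases "j + k - 1 \<le> n")
    case True
    have "(n choose (j+k-1)) * ((j+k-1) choose (k-1)) = (n choose (k-1)) * ((n - (k-1)) choose ((j+k-1) - (k-1)))"
      by (rule choose_mult) (use True assms in auto)
    moreover have "(j+k-1) - (k-1) = j" using True \<open>k-1 \<le> n\<close> assms by auto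
    ultimately show ?thesis by (metis mult.commute of_nat_mult)
  next
    case False
    then have "n - (k-1) < j" using assms \<open>k-1\<le>n\<close> by auto
    then have z: "(n - (k-1)) choose j = 0" "n choose (j+k-1) = 0" using False by auto
    show ?thesis by (simp only: z of_nat_0 mult_zero_left mult_zero_right)
  qed
  have *: "(\<Sum>j\<le>m. (-1)^j * real ((j+k-1) choose (k-1)) * real (n choose (j+k-1)))
      = real (n choose (k-1)) * (\<Sum>j\<le>m. (-1)^j * real ((n-(k-1)) choose j))"
    unfolding sum_distrib_left
  proof (rule sum.cong[OF refl])
    fix j
    have "(-1::real)^j * real ((j+k-1) choose (k-1)) * real (n choose (j+k-1)) = (-1)^j * (real ((j+k-1) choose (k-1)) * real (n choose (j+k-1)))"
      by (simp only: mult.assoc)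
    also have "\<dots> = (-1)^j * (real (n choose (k-1)) * real ((n-(k-1)) choose j))" by (simp only: eq)
    finally show "(-1::real)^j * real ((j+k-1) choose (k-1)) * real (n choose (j+k-1)) = real (n choose (k-1)) * ((-1)^j * real ((n-(k-1)) choose j))"
      by (simp only: mult.left_commute)
  qed
  show ?thesis
  proof (cases "n + 1 = k")
    case True
    then have n0: "n - (k-1) = 0" "n = k - 1" by auto
    have "(\<Sum>j\<le>m. (-1)^j * real ((n-(k-1)) choose j)) = 1"
      unfolding n0(1) by (induction m) auto
    then show ?thesis using * True n0 by simp
  next
    case False
    then have "n - (k-1) = Suc (n-k)" "k \<le> n" using \<open>k-1\<le>n\<close> assms by auto
    then show ?thesis using * False by (simp add: alt_partial)
  qed
qed

lemma Fc_signed: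
  assumes "k \<ge> 1"
  shows "(-1)^m * (Fc k n m - Ic k n) \<ge> 0"
proof (induction n)
  case 0
  have "Fc k 0 m = 0" unfolding Fc_def by (rule sum.neutral) (use assms in auto)
  then show ?case using assms by (simp add: Ic_def)
next
  case (Suc n)
  have c: "Suc n choose (j+k) = (n choose (j+k-1)) + (n choose (j+k))" for j
    using assms binomial_Suc_Suc[of n "j+k-1"] by simp
  have F: "Fc k (Suc n) m = Fc k n m + (\<Sum>j\<le>m. (-1)^j * real ((j+k-1) choose (k-1)) * real (n choose (j+k-1)))"
    unfolding Fc_def c by (simp add: algebra_simps sum.distrib)
  have I: "Ic k (Suc n) = Ic k n + (if n + 1 = k then 1 else 0)"
    unfolding Ic_def by auto
  have "(-1)^m * (Fc k (Suc n) m - Ic k (Suc n)) = (-1)^m * (Fc k n m - Ic k n)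
     + (-1)^m * ((\<Sum>j\<le>m. (-1)^j * real ((j+k-1) choose (k-1)) * real (n choose (j+k-1))) - (if n + 1 = k then 1 else 0))"
    unfolding F I by (simp add: algebra_simps)
  also have "(-1)^m * ((\<Sum>j\<le>m. (-1)^j * real ((j+k-1) choose (k-1)) * real (n choose (j+k-1))) - (if n + 1 = k then 1 else 0))
     = (if n + 1 = k then 0 else if k \<le> n then real (n choose (k-1)) * real ((n-k) choose m) else 0)"
    unfolding comb_step[OF assms] by (auto simp: power_mult_distrib[symmetric])
  finally show ?case using Suc by auto
qed

lemma Fc_bound:
  assumes "k \<ge> 1"
  shows "\<bar>Fc k n m - Ic k n\<bar> \<le> real ((m+k-1) choose (k-1)) * real (n choose (m+k))"
proof (cases m)
  case 0
  have "k \<le> n \<Longrightarrow> n choose k \<ge> 1"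
    by (metis Suc_leI zero_less_binomial_iff One_nat_def)
  then show ?thesis using assms 0
    by (auto simp: Fc_def Ic_def) 
next
  case (Suc m')
  have F: "Fc k n m = Fc k n m' + (-1)^m * real ((m+k-1) choose (k-1)) * real (n choose (m+k))"
    unfolding Fc_def Suc by simp
  have a: "(-1)^m * (Fc k n m - Ic k n) \<ge> 0" "(-1)^m' * (Fc k n m' - Ic k n) \<ge> 0"
    using Fc_signed[OF assms] by auto
  have b: "(-1)^m * (Fc k n m - Ic k n) = - ((-1)^m' * (Fc k n m' - Ic k n)) + real ((m+k-1) choose (k-1)) * real (n choose (m+k))"
  proof -
    have pm: "(-1::real)^m = - ((-1)^m')" using Suc by simp
    have sq: "(-1::real)^m' * (-1)^m' = 1" by (simp flip: power_add)
    show ?thesis unfolding F pm by (simp add: algebra_simps sq)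
  qed
  have "\<bar>Fc k n m - Ic k n\<bar> = (-1)^m * (Fc k n m - Ic k n)"
    using a(1) by (cases "even m") (auto simp: abs_if)
  then show ?thesis using a b by linarith
qed


definition Kn :: "nat \<Rightarrow> nat \<Rightarrow> nat set set" where
  "Kn n l = {I. I \<subseteq> {1..n} \<and> card I = l}"

definition Nn :: "(nat \<Rightarrow> 'a set) \<Rightarrow> nat \<Rightarrow> 'a \<Rightarrow> nat" where
  "Nn A n w = card {i\<in>{1..n}. w \<in> A i}"

lemma finite_Kn: "finite (Kn n l)"
proof -
  have "Kn n l \<subseteq> Pow {1..n}" unfolding Kn_def by auto
  then show ?thesis by (rule finite_subset) simp
qed

lemma Kn_ksubsets: "Kn n l \<subseteq> ksubsets l"
  unfolding Kn_def ksubsets_def by (auto intro: finite_subset)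

lemma Kn_mono: "n \<le> n' \<Longrightarrow> Kn n l \<subseteq> Kn n' l"
  unfolding Kn_def by auto

lemma Kn_nonempty: "I \<in> Kn n l \<Longrightarrow> l \<ge> 1 \<Longrightarrow> I \<noteq> {}"
  unfolding Kn_def by auto

lemma sum_ind_Kn: "(\<Sum>I\<in>Kn n l. indicator (\<Inter>i\<in>I. A i) w) = real (Nn A n w choose l)"
proof -
  have "(\<Sum>I\<in>Kn n l. indicator (\<Inter>i\<in>I. A i) w) = (\<Sum>I\<in>Kn n l. if w \<in> (\<Inter>i\<in>I. A i) then 1 else (0::real))"
    by (auto simp: indicator_def intro!: sum.cong)
  also have "\<dots> = real (card {I\<in>Kn n l. w \<in> (\<Inter>i\<in>I. A i)})"
    by (simp add: sum.inter_filter[symmetric] finite_Kn)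
  also have "{I\<in>Kn n l. w \<in> (\<Inter>i\<in>I. A i)} = {I. I \<subseteq> {i\<in>{1..n}. w \<in> A i} \<and> card I = l}"
    unfolding Kn_def by auto
  also have "card \<dots> = Nn A n w choose l"
    unfolding Nn_def by (rule n_subsets) simp
  finally show ?thesis .
qed

lemma inter_sets:
  assumes "\<And>i. i \<ge> 1 \<Longrightarrow> A i \<in> sets M" "I \<in> Kn n l" "l \<ge> 1"
  shows "(\<Inter>i\<in>I. A i) \<in> sets M"
proof -
  have "finite I" "I \<noteq> {}" "\<forall>i\<in>I. i \<ge> 1" using assms(2,3) unfolding Kn_def
    by (auto intro: finite_subset)
  then show ?thesis using assms(1) by (intro sets.finite_INT) auto
qed

lemma Nn_integral:
  assumes P: "prob_space M" and A: "\<And>i. i \<ge> 1 \<Longrightarrow> A i \<in> sets M" and l: "l \<ge> 1"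
  shows "integrable M (\<lambda>w. real (Nn A n w choose l))"
    "integral\<^sup>L M (\<lambda>w. real (Nn A n w choose l)) = (\<Sum>I\<in>Kn n l. measure M (\<Inter>i\<in>I. A i))"
proof -
  interpret prob_space M by (rule P)
  have eq: "(\<lambda>w. real (Nn A n w choose l)) = (\<lambda>w. \<Sum>I\<in>Kn n l. indicator (\<Inter>i\<in>I. A i) w)"
    by (simp add: sum_ind_Kn)
  have int: "integrable M (indicator (\<Inter>i\<in>I. A i) :: 'a \<Rightarrow> real)" if "I \<in> Kn n l" for I
  proof -
    have s: "(\<Inter>i\<in>I. A i) \<in> sets M" by (rule inter_sets[where A=A]) (use A that l in auto)
    show ?thesis using s emeasure_finite[of "\<Inter>i\<in>I. A i"] by (simp add: less_top[symmetric])
  qed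
  have s: "(\<Inter>i\<in>I. A i) \<in> sets M" if "I \<in> Kn n l" for I
    by (rule inter_sets[where A=A]) (use A that l in auto)
  show "integrable M (\<lambda>w. real (Nn A n w choose l))"
    unfolding eq by (rule Bochner_Integration.integrable_sum) (use int in auto)
  show "integral\<^sup>L M (\<lambda>w. real (Nn A n w choose l)) = (\<Sum>I\<in>Kn n l. measure M (\<Inter>i\<in>I. A i))"
    unfolding eq using int s
    by (subst Bochner_Integration.integral_sum) (auto intro!: sum.cong simp: Int_absorb2 sets.sets_into_space)
qed

definition Uk :: "(nat \<Rightarrow> 'a set) \<Rightarrow> nat \<Rightarrow> nat \<Rightarrow> 'a set" where
  "Uk A k n = (\<Union>I\<in>Kn n k. \<Inter>i\<in>I. A i)"

lemma Uk_sets: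
  assumes "\<And>i. i \<ge> 1 \<Longrightarrow> A i \<in> sets M" "k \<ge> 1"
  shows "Uk A k n \<in> sets M"
proof -
  have s: "(\<Inter>i\<in>I. A i) \<in> sets M" if "I \<in> Kn n k" for I
    by (rule inter_sets[where A=A]) (use assms that in auto)
  show ?thesis unfolding Uk_def using s finite_Kn by (intro sets.finite_UN) auto
qed

lemma indicator_Uk: "indicator (Uk A k n) w = Ic k (Nn A n w)"
proof -
  have "w \<in> Uk A k n \<longleftrightarrow> k \<le> Nn A n w"
  proof
    assume "w \<in> Uk A k n"
    then obtain I where I: "I \<subseteq> {1..n}" "card I = k" "\<forall>i\<in>I. w \<in> A i" unfolding Uk_def Kn_def by auto
    then have "I \<subseteq> {i\<in>{1..n}. w \<in> A i}" by auto
    then have "card I \<le> card {i\<in>{1..n}. w \<in> A i}" by (intro card_mono) auto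
    then show "k \<le> Nn A n w" unfolding Nn_def using I by simp
  next
    assume "k \<le> Nn A n w"
    then obtain I where "I \<subseteq> {i\<in>{1..n}. w \<in> A i}" "card I = k"
      unfolding Nn_def by (rule obtain_subset_with_card_n)
    then have "I \<in> Kn n k" "w \<in> (\<Inter>i\<in>I. A i)" unfolding Kn_def by auto
    then show "w \<in> Uk A k n" unfolding Uk_def by blast
  qed
  then show ?thesis by (simp add: indicator_def Ic_def)
qed





lemma finite_bonf:
  assumes P: "prob_space M" and A: "\<And>i. i \<ge> 1 \<Longrightarrow> A i \<in> sets M" and k: "k \<ge> 1"
  shows "\<bar>(\<Sum>j\<le>m. (-1)^j * real ((j+k-1) choose (k-1)) * (\<Sum>I\<in>Kn n (j+k). measure M (\<Inter>i\<in>I. A i)))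
           - measure M (Uk A k n)\<bar>
         \<le> real ((m+k-1) choose (k-1)) * (\<Sum>I\<in>Kn n (m+k). measure M (\<Inter>i\<in>I. A i))"
proof -
  interpret prob_space M by (rule P)
  define X where "X l w = real (Nn A n w choose l)" for l w
  have Xi: "integrable M (X l)" "integral\<^sup>L M (X l) = (\<Sum>I\<in>Kn n l. measure M (\<Inter>i\<in>I. A i))" if "l \<ge> 1" for l
    using Nn_integral[OF P A that] unfolding X_def by auto
  have Us: "Uk A k n \<in> sets M" by (rule Uk_sets[where A=A]) (use A k in auto)
  have Ui: "integrable M (indicator (Uk A k n) :: 'a \<Rightarrow> real)"
    using Us emeasure_finite[of "Uk A k n"] by (simp add: less_top[symmetric])
  define g where "g w = (\<Sum>j\<le>m. (-1)^j * real ((j+k-1) choose (k-1)) * X (j+k) w) - indicator (Uk A k n) w" for w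
  define h where "h w = real ((m+k-1) choose (k-1)) * X (m+k) w" for w
  have gi: "integrable M g" unfolding g_def
    using Xi k Ui by (intro Bochner_Integration.integrable_diff Bochner_Integration.integrable_sum integrable_mult_right) auto
  have hi: "integrable M h" unfolding h_def using Xi k by auto
  have gI: "integral\<^sup>L M g = (\<Sum>j\<le>m. (-1)^j * real ((j+k-1) choose (k-1)) * (\<Sum>I\<in>Kn n (j+k). measure M (\<Inter>i\<in>I. A i)))
           - measure M (Uk A k n)"
  proof -
    have "integral\<^sup>L M g = integral\<^sup>L M (\<lambda>w. \<Sum>j\<le>m. (-1)^j * real ((j+k-1) choose (k-1)) * X (j+k) w) - integral\<^sup>L M (indicator (Uk A k n))"
      unfolding g_def using Xi k Ui
      by (intro Bochner_Integration.integral_diff Bochner_Integration.integrable_sum integrable_mult_right) auto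
    also have "integral\<^sup>L M (\<lambda>w. \<Sum>j\<le>m. (-1)^j * real ((j+k-1) choose (k-1)) * X (j+k) w)
        = (\<Sum>j\<le>m. integral\<^sup>L M (\<lambda>w. (-1)^j * real ((j+k-1) choose (k-1)) * X (j+k) w))"
      using Xi k by (intro Bochner_Integration.integral_sum integrable_mult_right) auto
    also have "\<dots> = (\<Sum>j\<le>m. (-1)^j * real ((j+k-1) choose (k-1)) * (\<Sum>I\<in>Kn n (j+k). measure M (\<Inter>i\<in>I. A i)))"
      using Xi k by (intro sum.cong refl) auto
    also have "integral\<^sup>L M (indicator (Uk A k n) :: 'a \<Rightarrow> real) = measure M (Uk A k n)"
      using Us by (simp add: Int_absorb2 sets.sets_into_space)
    finally show ?thesis .
  qed
  have hI: "integral\<^sup>L M h = real ((m+k-1) choose (k-1)) * (\<Sum>I\<in>Kn n (m+k). measure M (\<Inter>i\<in>I. A i))"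
    unfolding h_def using Xi k by auto
  have pw: "\<bar>g w\<bar> \<le> h w" for w
  proof -
    have "g w = Fc k (Nn A n w) m - Ic k (Nn A n w)"
      unfolding g_def X_def Fc_def indicator_Uk ..
    then show ?thesis unfolding h_def X_def using Fc_bound[OF k] by simp
  qed
  have "integral\<^sup>L M g \<le> integral\<^sup>L M h"
    using gi hi pw by (intro integral_mono) (auto simp: abs_le_iff)
  moreover have "- integral\<^sup>L M h \<le> integral\<^sup>L M g"
  proof -
    have pw2: "- h w \<le> g w" for w using pw[of w] by linarith
    have "integral\<^sup>L M (\<lambda>w. - h w) \<le> integral\<^sup>L M g"
      using gi hi pw2 by (intro integral_mono) auto
    then show ?thesis by simp
  qed
  ultimately show ?thesis unfolding gI[symmetric] hI[symmetric] by linarith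
qed




lemma Sn_lim:
  assumes fin: "Ssum M A l < \<infinity>"
  shows "(\<lambda>n. \<Sum>I\<in>Kn n l. measure M (\<Inter>i\<in>I. A i)) \<longlonglongrightarrow> enn2real (Ssum M A l)"
proof -
  define f where "f I = ennreal (measure M (\<Inter>i\<in>I. A i))" for I
  define g where "g n = sum f (Kn n l)" for n
  have S: "Ssum M A l = (SUP F\<in>{F. finite F \<and> F \<subseteq> ksubsets l}. sum f F)"
    unfolding Ssum_def f_def by (rule nonneg_infsum_complete) simp
  have inc: "incseq g" unfolding g_def incseq_def
    by (intro allI impI sum_mono2 finite_Kn Kn_mono) auto
  have "(SUP n. g n) = Ssum M A l"
  proof (rule antisym)
    show "(SUP n. g n) \<le> Ssum M A l" unfolding S g_def
      by (intro SUP_least SUP_upper) (auto simp: finite_Kn intro: subsetD[OF Kn_ksubsets])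
    show "Ssum M A l \<le> (SUP n. g n)" unfolding S
    proof (intro SUP_least)
      fix F assume F: "F \<in> {F. finite F \<and> F \<subseteq> ksubsets l}"
      then have "finite (\<Union>F)" unfolding ksubsets_def by auto
      then obtain N where N: "\<forall>x\<in>\<Union>F. x \<le> N" using finite_nat_set_iff_bounded_le by blast
      have "F \<subseteq> Kn N l" using F N unfolding ksubsets_def Kn_def by fastforce
      then have "sum f F \<le> g N" unfolding g_def by (intro sum_mono2 finite_Kn) auto
      also have "\<dots> \<le> (SUP n. g n)" by (rule SUP_upper) simp
      finally show "sum f F \<le> (SUP n. g n)" .
    qed
  qed
  then have "g \<longlonglongrightarrow> Ssum M A l" using LIMSEQ_SUP[OF inc] by simp
  then have "(\<lambda>n. enn2real (g n)) \<longlonglongrightarrow> enn2real (Ssum M A l)"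
    using fin by (intro tendsto_enn2real) auto
  moreover have "enn2real (g n) = (\<Sum>I\<in>Kn n l. measure M (\<Inter>i\<in>I. A i))" for n
  proof -
    have "(\<Sum>I\<in>Kn n l. measure M (\<Inter>i\<in>I. A i)) \<ge> 0" by (intro sum_nonneg) auto
    then show ?thesis unfolding g_def f_def by (subst sum_ennreal) auto
  qed
  ultimately show ?thesis by simp
qed

lemma Uk_lim:
  assumes P: "prob_space M" and A: "\<And>i. i \<ge> 1 \<Longrightarrow> A i \<in> sets M" and k: "k \<ge> 1"
  shows "(\<lambda>n. measure M (Uk A k n)) \<longlonglongrightarrow> measure M (\<Union>I\<in>ksubsets k. \<Inter>i\<in>I. A i)"
proof -
  interpret prob_space M by (rule P)
  have U: "(\<Union>n. Uk A k n) = (\<Union>I\<in>ksubsets k. \<Inter>i\<in>I. A i)"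
  proof
    show "(\<Union>n. Uk A k n) \<subseteq> (\<Union>I\<in>ksubsets k. \<Inter>i\<in>I. A i)"
      unfolding Uk_def using Kn_ksubsets by blast
    show "(\<Union>I\<in>ksubsets k. \<Inter>i\<in>I. A i) \<subseteq> (\<Union>n. Uk A k n)"
    proof
      fix w assume "w \<in> (\<Union>I\<in>ksubsets k. \<Inter>i\<in>I. A i)"
      then obtain I where I: "I \<in> ksubsets k" "w \<in> (\<Inter>i\<in>I. A i)" by blast
      then have "finite I" unfolding ksubsets_def by auto
      then obtain N where N: "\<forall>x\<in>I. x \<le> N" using finite_nat_set_iff_bounded_le by blast
      have "I \<in> Kn N k" using I N unfolding ksubsets_def Kn_def by auto
      then show "w \<in> (\<Union>n. Uk A k n)" using I unfolding Uk_def by blast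
    qed
  qed
  have "(\<lambda>n. measure M (Uk A k n)) \<longlonglongrightarrow> measure M (\<Union>n. Uk A k n)"
  proof (rule finite_Lim_measure_incseq)
    show "range (Uk A k) \<subseteq> sets M" using Uk_sets[where A=A] A k by blast
    show "incseq (Uk A k)" unfolding incseq_def Uk_def using Kn_mono by blast
  qed
  then show ?thesis unfolding U .
qed

lemma key_bound:
  assumes P: "prob_space M" and A: "\<And>i. i \<ge> 1 \<Longrightarrow> A i \<in> sets M" and k: "k \<ge> 1"
    and fin: "\<forall>l\<ge>1. Ssum M A l < \<infinity>"
  shows "\<bar>(\<Sum>j\<le>m. (-1)^j * real ((j+k-1) choose (k-1)) * enn2real (Ssum M A (j+k)))
           - measure M (\<Union>I\<in>ksubsets k. \<Inter>i\<in>I. A i)\<bar>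
         \<le> real ((m+k-1) choose (k-1)) * enn2real (Ssum M A (m+k))"
proof (rule LIMSEQ_le)
  show "(\<lambda>n. \<bar>(\<Sum>j\<le>m. (-1)^j * real ((j+k-1) choose (k-1)) * (\<Sum>I\<in>Kn n (j+k). measure M (\<Inter>i\<in>I. A i)))
           - measure M (Uk A k n)\<bar>) \<longlonglongrightarrow> \<bar>(\<Sum>j\<le>m. (-1)^j * real ((j+k-1) choose (k-1)) * enn2real (Ssum M A (j+k)))
           - measure M (\<Union>I\<in>ksubsets k. \<Inter>i\<in>I. A i)\<bar>"
    using fin k by (intro tendsto_rabs tendsto_diff tendsto_sum tendsto_mult_left Sn_lim Uk_lim[where A=A and M=M and k=k, OF P A k]) auto
  show "(\<lambda>n. real ((m+k-1) choose (k-1)) * (\<Sum>I\<in>Kn n (m+k). measure M (\<Inter>i\<in>I. A i)))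
      \<longlonglongrightarrow> real ((m+k-1) choose (k-1)) * enn2real (Ssum M A (m+k))"
    using fin k by (intro tendsto_mult_left Sn_lim) auto
  show "\<exists>N. \<forall>n\<ge>N. \<bar>(\<Sum>j\<le>m. (-1)^j * real ((j+k-1) choose (k-1)) * (\<Sum>I\<in>Kn n (j+k). measure M (\<Inter>i\<in>I. A i)))
           - measure M (Uk A k n)\<bar> \<le> real ((m+k-1) choose (k-1)) * (\<Sum>I\<in>Kn n (m+k). measure M (\<Inter>i\<in>I. A i))"
    using finite_bonf[where A=A and M=M and k=k and m=m, OF P A k] by blast
qed




lemma pow_le_choose:
  assumes k: "k \<ge> 1"
  shows "real (j+k)^(k-1) \<le> (2 * real (k-1))^(k-1) * real ((j+k-1) choose (k-1))"
proof (cases "k = 1")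
  case True then show ?thesis by simp
next
  case False
  then have k2: "k \<ge> 2" using k by simp
  have b: "(real (j+k-1) / real (k-1))^(k-1) \<le> real ((j+k-1) choose (k-1))"
    by (rule binomial_ge_n_over_k_pow_k) simp
  have "real (j+k) \<le> 2 * real (k-1) * (real (j+k-1) / real (k-1))"
  proof -
    have r: "real (k-1) > 0" using k2 by simp
    have "2 * real (k-1) * (real (j+k-1) / real (k-1)) = 2 * real (j+k-1)"
      using r by (simp only: times_divide_eq_right mult.commute[of 2] mult.assoc nonzero_mult_div_cancel_left less_irrefl)
    moreover have "real (j+k-1) = real j + real k - 1" using k2 by (simp add: of_nat_diff)
    ultimately show ?thesis using k2 by simp
  qed
  then have "real (j+k)^(k-1) \<le> (2 * real (k-1) * (real (j+k-1) / real (k-1)))^(k-1)"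
    by (intro power_mono) auto
  also have "\<dots> = (2 * real (k-1))^(k-1) * (real (j+k-1) / real (k-1))^(k-1)"
    by (rule power_mult_distrib)
  also have "\<dots> \<le> (2 * real (k-1))^(k-1) * real ((j+k-1) choose (k-1))"
    using b by (intro mult_left_mono) auto
  finally show ?thesis .
qed

lemma choose_le_pow':
  assumes k: "k \<ge> 1"
  shows "real ((j+k-1) choose (k-1)) \<le> real (j+k)^(k-1)"
proof -
  have "(j+k-1) choose (k-1) \<le> (j+k-1)^(k-1)" by (rule binomial_le_pow) simp
  also have "\<dots> \<le> (j+k)^(k-1)" by (intro power_mono) auto
  finally show ?thesis by (metis of_nat_le_iff of_nat_power)
qed

lemma fwd:
  assumes k: "k \<ge> 1"
    and S: "summable (\<lambda>j. (-1) ^ j * real ((j + k - 1) choose (k - 1)) * enn2real (Ssum M A (j + k)))"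
  shows "(\<lambda>l. real l ^ (k - 1) * enn2real (Ssum M A l)) \<longlonglongrightarrow> 0"
proof -
  define s where "s l = enn2real (Ssum M A l)" for l
  have s0: "s l \<ge> 0" for l unfolding s_def by simp
  have "(\<lambda>j. (-1) ^ j * real ((j + k - 1) choose (k - 1)) * s (j + k)) \<longlonglongrightarrow> 0"
    using summable_LIMSEQ_zero[OF S] unfolding s_def .
  then have "(\<lambda>j. \<bar>(-1) ^ j * real ((j + k - 1) choose (k - 1)) * s (j + k)\<bar>) \<longlonglongrightarrow> 0"
    by (rule tendsto_rabs_zero)
  moreover have "\<bar>(-1) ^ j * real ((j + k - 1) choose (k - 1)) * s (j + k)\<bar> = real ((j + k - 1) choose (k - 1)) * s (j + k)" for j
    using s0[of "j+k"] by (simp add: abs_mult)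
  ultimately have b: "(\<lambda>j. real ((j + k - 1) choose (k - 1)) * s (j + k)) \<longlonglongrightarrow> 0" by simp
  have "(\<lambda>j. real (j+k) ^ (k - 1) * s (j+k)) \<longlonglongrightarrow> 0"
  proof (rule Lim_null_comparison)
    show "\<forall>\<^sub>F j in sequentially. norm (real (j+k) ^ (k - 1) * s (j+k)) \<le> (2 * real (k-1))^(k-1) * (real ((j + k - 1) choose (k - 1)) * s (j + k))"
    proof (intro always_eventually allI)
      fix j
      have "real (j+k) ^ (k - 1) * s (j+k) \<le> ((2 * real (k-1))^(k-1) * real ((j+k-1) choose (k-1))) * s (j+k)"
        using pow_le_choose[OF k, of j] s0[of "j+k"] by (intro mult_right_mono) auto
      then show "norm (real (j+k) ^ (k - 1) * s (j+k)) \<le> (2 * real (k-1))^(k-1) * (real ((j + k - 1) choose (k - 1)) * s (j + k))"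
        using s0[of "j+k"] by (simp add: mult.assoc)
    qed
    show "(\<lambda>j. (2 * real (k-1))^(k-1) * (real ((j + k - 1) choose (k - 1)) * s (j + k))) \<longlonglongrightarrow> 0"
      using tendsto_mult_right_zero[OF b] by simp
  qed
  then have "(\<lambda>l. real l ^ (k - 1) * s l) \<longlonglongrightarrow> 0"
    by (rule LIMSEQ_offset[where f="\<lambda>l. real l ^ (k - 1) * s l"])
  then show ?thesis unfolding s_def .
qed

lemma bwd:
  assumes P: "prob_space M" and A: "\<And>i. i \<ge> 1 \<Longrightarrow> A i \<in> sets M" and k: "k \<ge> 1"
    and fin: "\<forall>l\<ge>1. Ssum M A l < \<infinity>"
    and L: "(\<lambda>l. real l ^ (k - 1) * enn2real (Ssum M A l)) \<longlonglongrightarrow> 0"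
  shows "(\<lambda>j. (-1) ^ j * real ((j + k - 1) choose (k - 1)) * enn2real (Ssum M A (j + k)))
           sums measure M (\<Union>I\<in>ksubsets k. \<Inter>i\<in>I. A i)"
proof -
  define s where "s l = enn2real (Ssum M A l)" for l
  have s0: "s l \<ge> 0" for l unfolding s_def by simp
  have L': "(\<lambda>j. real (j+k) ^ (k - 1) * s (j+k)) \<longlonglongrightarrow> 0"
    using LIMSEQ_ignore_initial_segment[OF L, of k] unfolding s_def by simp
  have b: "(\<lambda>j. real ((j + k - 1) choose (k - 1)) * s (j + k)) \<longlonglongrightarrow> 0"
  proof (rule Lim_null_comparison[OF _ L'])
    show "\<forall>\<^sub>F j in sequentially. norm (real ((j + k - 1) choose (k - 1)) * s (j + k)) \<le> real (j+k) ^ (k - 1) * s (j+k)"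
      using choose_le_pow'[OF k] s0 by (intro always_eventually allI) (auto intro: mult_right_mono)
  qed
  have "(\<lambda>m. (\<Sum>j\<le>m. (-1)^j * real ((j+k-1) choose (k-1)) * s (j+k)) - measure M (\<Union>I\<in>ksubsets k. \<Inter>i\<in>I. A i)) \<longlonglongrightarrow> 0"
  proof (rule Lim_null_comparison[OF _ b])
    show "\<forall>\<^sub>F m in sequentially. norm ((\<Sum>j\<le>m. (-1)^j * real ((j+k-1) choose (k-1)) * s (j+k)) - measure M (\<Union>I\<in>ksubsets k. \<Inter>i\<in>I. A i))
       \<le> real ((m + k - 1) choose (k - 1)) * s (m + k)"
      using key_bound[where A=A and M=M and k=k, OF P A k fin] unfolding s_def
      by (intro always_eventually allI) simp
  qed
  then have "(\<lambda>m. (\<Sum>j\<le>m. (-1)^j * real ((j+k-1) choose (k-1)) * s (j+k))) \<longlonglongrightarrow> measure M (\<Union>I\<in>ksubsets k. \<Inter>i\<in>I. A i)"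
    by (rule LIM_zero_cancel)
  then show ?thesis unfolding sums_def_le s_def .
qed

theorem theorem1p1:
  fixes M :: "'a measure" and A :: "nat \<Rightarrow> 'a set" and k :: nat
  assumes "prob_space M"
    and "\<And>i. i \<ge> 1 \<Longrightarrow> A i \<in> sets M"
    and "k \<ge> 1"
  shows "((\<forall>l\<ge>1. Ssum M A l < \<infinity>)
          \<and> summable (\<lambda>j. (-1) ^ j * real ((j + k - 1) choose (k - 1)) * enn2real (Ssum M A (j + k)))
          \<and> measure M (\<Union>I\<in>ksubsets k. \<Inter>i\<in>I. A i)
              = (\<Sum>j. (-1) ^ j * real ((j + k - 1) choose (k - 1)) * enn2real (Ssum M A (j + k))))
     \<longleftrightarrow>
         ((\<forall>l\<ge>1. Ssum M A l < \<infinity>)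
          \<and> (\<lambda>l. real l ^ (k - 1) * enn2real (Ssum M A l)) \<longlonglongrightarrow> 0)"
proof
  assume H: "(\<forall>l\<ge>1. Ssum M A l < \<infinity>)
          \<and> summable (\<lambda>j. (-1) ^ j * real ((j + k - 1) choose (k - 1)) * enn2real (Ssum M A (j + k)))
          \<and> measure M (\<Union>I\<in>ksubsets k. \<Inter>i\<in>I. A i)
              = (\<Sum>j. (-1) ^ j * real ((j + k - 1) choose (k - 1)) * enn2real (Ssum M A (j + k)))"
  then show "(\<forall>l\<ge>1. Ssum M A l < \<infinity>) \<and> (\<lambda>l. real l ^ (k - 1) * enn2real (Ssum M A l)) \<longlonglongrightarrow> 0"
    using fwd[OF assms(3)] by blast
next
  assume H: "(\<forall>l\<ge>1. Ssum M A l < \<infinity>) \<and> (\<lambda>l. real l ^ (k - 1) * enn2real (Ssum M A l)) \<longlonglongrightarrow> 0"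
  have "(\<lambda>j. (-1) ^ j * real ((j + k - 1) choose (k - 1)) * enn2real (Ssum M A (j + k)))
           sums measure M (\<Union>I\<in>ksubsets k. \<Inter>i\<in>I. A i)"
    using H by (intro bwd[where A=A and M=M and k=k, OF assms(1) assms(2) assms(3)]) auto
  then show "(\<forall>l\<ge>1. Ssum M A l < \<infinity>)
          \<and> summable (\<lambda>j. (-1) ^ j * real ((j + k - 1) choose (k - 1)) * enn2real (Ssum M A (j + k)))
          \<and> measure M (\<Union>I\<in>ksubsets k. \<Inter>i\<in>I. A i)
              = (\<Sum>j. (-1) ^ j * real ((j + k - 1) choose (k - 1)) * enn2real (Ssum M A (j + k)))"
    using H sums_summable sums_unique by blast
qed


end
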